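(* Let $X$ be a set and let $A$ and $B$ be Banach algebras of complex-valued functions on $X$ (with pointwise operations), each containing the constant functions on $X$. Let $\psi:A\to B$ be a continuous algebra homomorphism and $\varphi\in\Delta(B)$. Let $F$ be the linear span of the set of all $f\in A$ such that $P(f)=0$ for some nonzero polynomial $P$ in one complex variable. If $F$ is dense in $A$ (in the norm of $A$), then every $(\varphi,\psi)$-point derivation on $A$ is zero, i.e. $\mathfrak{D}_{(\varphi,\psi)}=\{0\}$.
   Context: $\Delta(B)$ denotes the set of all nonzero multiplicative linear functionals on $B$. A bounded linear functional $D$ on $A$ is a $(\varphi,\psi)$-point derivation if $D(ab)=\varphi(\psi(a))\,D(b)+\varphi(\psi(b))\,D(a)$ for all $a,b\in A$; $\mathfrak{D}_{(\varphi,\psi)}$ is the set of all of them. *)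

theory Defs
  imports "HOL-Computational_Algebra.Polynomial" "HOL-Analysis.Analysis"
begin

definition banach_function_algebra ::
  "('x \<Rightarrow> complex) set \<Rightarrow> (('x \<Rightarrow> complex) \<Rightarrow> real) \<Rightarrow> bool" where
  "banach_function_algebra A nA \<longleftrightarrow>
     (\<forall>c. (\<lambda>x. c) \<in> A) \<and>
     (\<forall>f\<in>A. \<forall>g\<in>A. (\<lambda>x. f x + g x) \<in> A) \<and>
     (\<forall>f\<in>A. \<forall>c. (\<lambda>x. c * f x) \<in> A) \<and>
     (\<forall>f\<in>A. \<forall>g\<in>A. (\<lambda>x. f x * g x) \<in> A) \<and>
     (\<forall>f\<in>A. nA f \<ge> 0) \<and>
     (\<forall>f\<in>A. nA f = 0 \<longleftrightarrow> f = (\<lambda>x. 0)) \<and>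
     (\<forall>f\<in>A. \<forall>c. nA (\<lambda>x. c * f x) = cmod c * nA f) \<and>
     (\<forall>f\<in>A. \<forall>g\<in>A. nA (\<lambda>x. f x + g x) \<le> nA f + nA g) \<and>
     (\<forall>f\<in>A. \<forall>g\<in>A. nA (\<lambda>x. f x * g x) \<le> nA f * nA g) \<and>
     (\<forall>s::nat \<Rightarrow> 'x \<Rightarrow> complex. (\<forall>n. s n \<in> A) \<and>
        (\<forall>e>0. \<exists>N. \<forall>m\<ge>N. \<forall>n\<ge>N. nA (\<lambda>x. s m x - s n x) < e) \<longrightarrow>
        (\<exists>l\<in>A. (\<lambda>n. nA (\<lambda>x. s n x - l x)) \<longlonglongrightarrow> 0))"

definition cont_alg_hom ::
  "('x \<Rightarrow> complex) set \<Rightarrow> (('x \<Rightarrow> complex) \<Rightarrow> real) \<Rightarrow>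
   ('y \<Rightarrow> complex) set \<Rightarrow> (('y \<Rightarrow> complex) \<Rightarrow> real) \<Rightarrow>
   (('x \<Rightarrow> complex) \<Rightarrow> ('y \<Rightarrow> complex)) \<Rightarrow> bool" where
  "cont_alg_hom A nA B nB \<psi> \<longleftrightarrow>
     (\<forall>f\<in>A. \<psi> f \<in> B) \<and>
     (\<forall>f\<in>A. \<forall>g\<in>A. \<psi> (\<lambda>x. f x + g x) = (\<lambda>y. \<psi> f y + \<psi> g y)) \<and>
     (\<forall>f\<in>A. \<forall>c. \<psi> (\<lambda>x. c * f x) = (\<lambda>y. c * \<psi> f y)) \<and>
     (\<forall>f\<in>A. \<forall>g\<in>A. \<psi> (\<lambda>x. f x * g x) = (\<lambda>y. \<psi> f y * \<psi> g y)) \<and>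
     (\<exists>C. \<forall>f\<in>A. nB (\<psi> f) \<le> C * nA f)"

definition lin_functional :: "('x \<Rightarrow> complex) set \<Rightarrow> (('x \<Rightarrow> complex) \<Rightarrow> complex) \<Rightarrow> bool" where
  "lin_functional A L \<longleftrightarrow>
     (\<forall>f\<in>A. \<forall>g\<in>A. L (\<lambda>x. f x + g x) = L f + L g) \<and>
     (\<forall>f\<in>A. \<forall>c. L (\<lambda>x. c * f x) = c * L f)"

definition char_space :: "('x \<Rightarrow> complex) set \<Rightarrow> (('x \<Rightarrow> complex) \<Rightarrow> complex) set" where
  "char_space B = {\<phi>. lin_functional B \<phi> \<and>
     (\<forall>f\<in>B. \<forall>g\<in>B. \<phi> (\<lambda>x. f x * g x) = \<phi> f * \<phi> g) \<and>
     (\<exists>f\<in>B. \<phi> f \<noteq> 0)}"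

definition point_derivations ::
  "('x \<Rightarrow> complex) set \<Rightarrow> (('x \<Rightarrow> complex) \<Rightarrow> real) \<Rightarrow>
   (('y \<Rightarrow> complex) \<Rightarrow> complex) \<Rightarrow> (('x \<Rightarrow> complex) \<Rightarrow> ('y \<Rightarrow> complex)) \<Rightarrow>
   (('x \<Rightarrow> complex) \<Rightarrow> complex) set" where
  "point_derivations A nA \<phi> \<psi> = {D. lin_functional A D \<and>
     (\<exists>C. \<forall>f\<in>A. cmod (D f) \<le> C * nA f) \<and>
     (\<forall>f\<in>A. \<forall>g\<in>A. D (\<lambda>x. f x * g x) = \<phi> (\<psi> f) * D g + \<phi> (\<psi> g) * D f)}"

definition fun_span :: "('x \<Rightarrow> complex) set \<Rightarrow> ('x \<Rightarrow> complex) set" where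
  "fun_span S = {f. \<exists>(n::nat) c g. (\<forall>i<n. g i \<in> S) \<and> f = (\<lambda>x. \<Sum>i<n. c i * g i x)}"

definition algebraic_elements :: "('x \<Rightarrow> complex) set \<Rightarrow> ('x \<Rightarrow> complex) set" where
  "algebraic_elements A = {f \<in> A. \<exists>P :: complex poly. P \<noteq> 0 \<and> (\<forall>x. poly P (f x) = 0)}"

end

theory Submission
  imports Defs
begin

theorem corollary2p6:
  fixes A :: "('x \<Rightarrow> complex) set" and nA :: "('x \<Rightarrow> complex) \<Rightarrow> real"
    and B :: "('x \<Rightarrow> complex) set" and nB :: "('x \<Rightarrow> complex) \<Rightarrow> real"
    and \<psi> :: "('x \<Rightarrow> complex) \<Rightarrow> ('x \<Rightarrow> complex)"
    and \<phi> :: "('x \<Rightarrow> complex) \<Rightarrow> complex"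
  assumes "banach_function_algebra A nA"
    and "banach_function_algebra B nB"
    and "cont_alg_hom A nA B nB \<psi>"
    and "\<phi> \<in> char_space B"
    and "\<forall>f\<in>A. \<forall>e>0. \<exists>g\<in>fun_span (algebraic_elements A). nA (\<lambda>x. f x - g x) < e"
  shows "point_derivations A nA \<phi> \<psi> = {D. \<forall>f\<in>A. D f = 0}"
proof
  have Aconst: "\<And>c. (\<lambda>x. c) \<in> A" and Aadd: "\<And>f g. f \<in> A \<Longrightarrow> g \<in> A \<Longrightarrow> (\<lambda>x. f x + g x) \<in> A"
    and Ascale: "\<And>f c. f \<in> A \<Longrightarrow> (\<lambda>x. c * f x) \<in> A"
    and Amult: "\<And>f g. f \<in> A \<Longrightarrow> g \<in> A \<Longrightarrow> (\<lambda>x. f x * g x) \<in> A"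
    using assms(1) unfolding banach_function_algebra_def by auto
  have psiB: "\<And>f. f \<in> A \<Longrightarrow> \<psi> f \<in> B"
    and psiadd: "\<And>f g. f \<in> A \<Longrightarrow> g \<in> A \<Longrightarrow> \<psi> (\<lambda>x. f x + g x) = (\<lambda>y. \<psi> f y + \<psi> g y)"
    and psiscale: "\<And>f c. f \<in> A \<Longrightarrow> \<psi> (\<lambda>x. c * f x) = (\<lambda>y. c * \<psi> f y)"
    and psimult: "\<And>f g. f \<in> A \<Longrightarrow> g \<in> A \<Longrightarrow> \<psi> (\<lambda>x. f x * g x) = (\<lambda>y. \<psi> f y * \<psi> g y)"
    using assms(3) unfolding cont_alg_hom_def by auto
  have phiadd: "\<And>f g. f \<in> B \<Longrightarrow> g \<in> B \<Longrightarrow> \<phi> (\<lambda>x. f x + g x) = \<phi> f + \<phi> g"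
    and phiscale: "\<And>f c. f \<in> B \<Longrightarrow> \<phi> (\<lambda>x. c * f x) = c * \<phi> f"
    and phimult: "\<And>f g. f \<in> B \<Longrightarrow> g \<in> B \<Longrightarrow> \<phi> (\<lambda>x. f x * g x) = \<phi> f * \<phi> g"
    using assms(4) unfolding char_space_def lin_functional_def by auto
  define chi where "chi f = \<phi> (\<psi> f)" for f
  have chiadd: "\<And>f g. f \<in> A \<Longrightarrow> g \<in> A \<Longrightarrow> chi (\<lambda>x. f x + g x) = chi f + chi g"
    unfolding chi_def using psiadd phiadd psiB by simp
  have chiscale: "\<And>f c. f \<in> A \<Longrightarrow> chi (\<lambda>x. c * f x) = c * chi f"
    unfolding chi_def using psiscale phiscale psiB by simp
  have chimult: "\<And>f g. f \<in> A \<Longrightarrow> g \<in> A \<Longrightarrow> chi (\<lambda>x. f x * g x) = chi f * chi g"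
    unfolding chi_def using psimult phimult psiB by simp
  define one :: "'x \<Rightarrow> complex" where "one = (\<lambda>x. 1)"
  have oneA: "one \<in> A" unfolding one_def by (rule Aconst)
  have chione: "chi one * chi one = chi one"
    using chimult[OF oneA oneA] by (simp add: one_def)
  hence "chi one * (chi one - 1) = 0" by (simp add: algebra_simps)
  hence chi01: "chi one = 0 \<or> chi one = 1" by simp
  have chiconst: "chi one = 1 \<Longrightarrow> chi (\<lambda>x. c) = c" for c
    using chiscale[OF oneA, of c] by (simp add: one_def)
  show "point_derivations A nA \<phi> \<psi> \<subseteq> {D. \<forall>f\<in>A. D f = 0}"
  proof
    fix D assume "D \<in> point_derivations A nA \<phi> \<psi>"
    then have Dadd: "\<And>f g. f \<in> A \<Longrightarrow> g \<in> A \<Longrightarrow> D (\<lambda>x. f x + g x) = D f + D g"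
      and Dscale: "\<And>f c. f \<in> A \<Longrightarrow> D (\<lambda>x. c * f x) = c * D f"
      and Dbound: "\<exists>C. \<forall>f\<in>A. cmod (D f) \<le> C * nA f"
      and Dmult: "\<And>f g. f \<in> A \<Longrightarrow> g \<in> A \<Longrightarrow> D (\<lambda>x. f x * g x) = chi f * D g + chi g * D f"
      unfolding point_derivations_def lin_functional_def chi_def by auto
    have D0: "D (\<lambda>x. 0) = 0"
      using Dscale[OF oneA, of 0] by (simp add: one_def)
    show "D \<in> {D. \<forall>f\<in>A. D f = 0}"
    proof (cases "chi one = 0")
      case True
      have "chi f = 0" if "f \<in> A" for f
        using chimult[OF that oneA] True by (simp add: one_def)
      moreover have "D f = chi f * D one + chi one * D f" if "f \<in> A" for f
      proof -
        have "(\<lambda>x. f x * one x) = f" by (simp add: one_def)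
        then show ?thesis using Dmult[OF that oneA] by simp
      qed
      ultimately have "D f = 0" if "f \<in> A" for f using True that by (metis add_0 mult_zero_left)
      then show ?thesis by simp
    next
      case False
      hence c1: "chi one = 1" using chi01 by auto
      have "(\<lambda>x. one x * one x) = one" by (simp add: one_def)
      hence "D one = 2 * D one"
        using Dmult[OF oneA oneA] c1 by simp
      hence Done: "D one = 0" by simp
      have Dconst: "D (\<lambda>x. c) = 0" for c
        using Dscale[OF oneA, of c] Done by (simp add: one_def)
      have prodA: "finite T \<Longrightarrow> (\<lambda>x. \<Prod>r\<in>T. f x - r) \<in> A \<and> chi (\<lambda>x. \<Prod>r\<in>T. f x - r) = (\<Prod>r\<in>T. chi f - r)"
        if fA: "f \<in> A" for f and T :: "complex set"
      proof (induction T rule: finite_induct)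
        case empty
        then show ?case using Aconst chiconst[OF c1] by simp
      next
        case (insert r T)
        have g1: "(\<lambda>x. f x + (- r)) \<in> A" using Aadd[OF fA Aconst] .
        have g1': "(\<lambda>x. f x - r) \<in> A" using g1 by simp
        have cg: "chi (\<lambda>x. f x - r) = chi f - r"
          using chiadd[OF fA Aconst, of "-r"] chiconst[OF c1] by simp
        have "(\<lambda>x. (f x - r) * (\<Prod>r\<in>T. f x - r)) \<in> A"
          using Amult[OF g1' conjunct1[OF insert.IH]] by simp
        moreover have "chi (\<lambda>x. (f x - r) * (\<Prod>r\<in>T. f x - r)) = (chi f - r) * (\<Prod>r\<in>T. chi f - r)"
          using chimult[OF g1' conjunct1[OF insert.IH]] insert.IH cg by simp
        ultimately show ?case using insert.hyps by simp
      qed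
      have Dalg: "D f = 0" if "f \<in> algebraic_elements A" for f
      proof -
        from that obtain P :: "complex poly" where fA: "f \<in> A" and P: "P \<noteq> 0" "\<forall>x. poly P (f x) = 0"
          unfolding algebraic_elements_def by auto
        define S where "S = {z. poly P z = 0}"
        have finS: "finite S" unfolding S_def using poly_roots_finite[OF P(1)] .
        define l where "l = chi f"
        define g where "g = (\<lambda>x. f x - l)"
        define h where "h = (\<lambda>x. \<Prod>r\<in>S - {l}. f x - r)"
        have gA: "g \<in> A" unfolding g_def using Aadd[OF fA Aconst, of "-l"] by simp
        have chig: "chi g = 0" unfolding g_def
          using chiadd[OF fA Aconst, of "-l"] chiconst[OF c1] l_def by simp
        have Dg: "D g = D f" unfolding g_def
          using Dadd[OF fA Aconst, of "-l"] Dconst by simp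
        have hA: "h \<in> A" and chih: "chi h = (\<Prod>r\<in>S - {l}. l - r)"
          using prodA[OF fA, of "S - {l}"] finS unfolding h_def l_def by auto
        have chih0: "chi h \<noteq> 0" using chih finS by auto
        have gh: "(\<lambda>x. g x * h x) = (\<lambda>x. 0)"
        proof
          fix x
          show "g x * h x = 0"
          proof (cases "f x = l")
            case True then show ?thesis unfolding g_def by simp
          next
            case False
            hence "f x \<in> S - {l}" using P(2) unfolding S_def by auto
            hence "h x = 0" unfolding h_def using finS
              by (auto simp: prod_zero_iff intro!: bexI[of _ "f x"])
            then show ?thesis by simp
          qed
        qed
        have "0 = chi g * D h + chi h * D g" using Dmult[OF gA hA] gh D0 by simp
        hence "chi h * D g = 0" using chig by simp
        thus ?thesis using chih0 Dg by simp
      qed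
      have Dspan: "D f = 0 \<and> f \<in> A" if "f \<in> fun_span (algebraic_elements A)" for f
      proof -
        from that obtain n :: nat and c g where g: "\<forall>i<n. g i \<in> algebraic_elements A"
          and f: "f = (\<lambda>x. \<Sum>i<n. c i * g i x)" unfolding fun_span_def by blast
        have "\<forall>m\<le>n. D (\<lambda>x. \<Sum>i<m. c i * g i x) = 0 \<and> (\<lambda>x. \<Sum>i<m. c i * g i x) \<in> A"
        proof (intro allI impI)
          fix m assume "m \<le> n"
          then show "D (\<lambda>x. \<Sum>i<m. c i * g i x) = 0 \<and> (\<lambda>x. \<Sum>i<m. c i * g i x) \<in> A"
          proof (induction m)
            case 0 then show ?case using Dconst Aconst by simp
          next
            case (Suc m)
            have gm: "g m \<in> A" "D (g m) = 0" using g Suc.prems Dalg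
              unfolding algebraic_elements_def by auto
            have IH: "D (\<lambda>x. \<Sum>i<m. c i * g i x) = 0" "(\<lambda>x. \<Sum>i<m. c i * g i x) \<in> A"
              using Suc by auto
            have s: "(\<lambda>x. c m * g m x) \<in> A" "D (\<lambda>x. c m * g m x) = 0"
              using Ascale[OF gm(1)] Dscale[OF gm(1)] gm(2) by auto
            show ?case using Aadd[OF IH(2) s(1)] Dadd[OF IH(2) s(1)] IH s by simp
          qed
        qed
        thus ?thesis using f by auto
      qed
      obtain C where C: "\<forall>f\<in>A. cmod (D f) \<le> C * nA f" using Dbound by auto
      have "D f = 0" if fA: "f \<in> A" for f
      proof -
        have "cmod (D f) \<le> e" if e: "e > 0" for e
        proof -
          define C' where "C' = max C 1"
          have C'pos: "C' > 0" unfolding C'_def by simp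
          obtain g where g: "g \<in> fun_span (algebraic_elements A)" and ng: "nA (\<lambda>x. f x - g x) < e / C'"
          proof -
            have "e / C' > 0" using e C'pos by simp
            then show ?thesis using assms(5) fA that by blast
          qed
          have gA: "g \<in> A" "D g = 0" using Dspan[OF g] by auto
          have mg: "(\<lambda>x. (-1) * g x) \<in> A" using Ascale[OF gA(1)] .
          have dA: "(\<lambda>x. f x - g x) \<in> A" using Aadd[OF fA mg] by simp
          have "D (\<lambda>x. f x + (-1) * g x) = D f" using Dadd[OF fA mg] Dscale[OF gA(1), of "-1"] gA(2) by (simp only: mult_zero_right add_0_right)
          hence Dd: "D (\<lambda>x. f x - g x) = D f" by simp
          have nn: "nA (\<lambda>x. f x - g x) \<ge> 0" using assms(1) dA unfolding banach_function_algebra_def by auto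
          have "cmod (D f) \<le> C * nA (\<lambda>x. f x - g x)" using C dA unfolding Dd[symmetric] by blast
          also have "\<dots> \<le> C' * nA (\<lambda>x. f x - g x)" unfolding C'_def using nn
            by (simp add: mult_right_mono)
          also have "\<dots> \<le> C' * (e / C')" using ng C'pos by (intro mult_left_mono) auto
          also have "\<dots> = e" using C'pos by simp
          finally show ?thesis .
        qed
        hence "cmod (D f) \<le> 0" by (metis field_le_epsilon add_0)
        thus ?thesis by simp
      qed
      thus ?thesis by auto
    qed
  qed
  show "{D. \<forall>f\<in>A. D f = 0} \<subseteq> point_derivations A nA \<phi> \<psi>"
  proof
    fix D :: "('x \<Rightarrow> complex) \<Rightarrow> complex" assume D: "D \<in> {D. \<forall>f\<in>A. D f = 0}"
    have D0: "\<forall>f\<in>A. D f = 0" using D by simp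
    have b: "\<exists>C. \<forall>f\<in>A. cmod (D f) \<le> C * nA f"
      by (rule exI[of _ 0]) (simp add: D0)
    show "D \<in> point_derivations A nA \<phi> \<psi>"
      unfolding point_derivations_def lin_functional_def
      using D0 Aadd Ascale Amult b by simp
  qed
qed

end
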